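(* Let $r\geq 1$, let $\mathbb R^r$ be endowed with the supremum norm $\|\cdot\|_\infty$, and let $|K|$ denote the Lebesgue measure of a Borel set $K\subset\mathbb R^r$. Let $J_r$ be the $r\times r$ matrix with $1$'s on the diagonal and on the superdiagonal and $0$'s elsewhere. Then there exist positive constants $C,C'$ (depending on $r$) such that for every $n\geq 2$, $$Cn^{-r(r-1)/2}\leq\bigl|\{x\in\mathbb R^r: \|J_r^kx\|_\infty\leq 1\text{ for }0\leq k<n\}\bigr|\leq C'n^{-r(r-1)/2}.$$ *)

theory Defs
  imports "HOL-Analysis.Analysis"
begin

text \<open>Vectors of R^r are represented as functions nat => real (only the
  components i < r matter); r x r matrices as functions nat => nat => real
  (only entries with i, j < r matter). Lebesgue measure on R^r is the
  product measure PiM {..<r} (\<lambda>_. lborel).\<close>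

definition Jmat :: "nat \<Rightarrow> nat \<Rightarrow> nat \<Rightarrow> real" where
  "Jmat r i j = (if i < r \<and> j < r \<and> (j = i \<or> j = Suc i) then 1 else 0)"

definition mat_mult :: "nat \<Rightarrow> (nat \<Rightarrow> nat \<Rightarrow> real) \<Rightarrow> (nat \<Rightarrow> nat \<Rightarrow> real) \<Rightarrow> nat \<Rightarrow> nat \<Rightarrow> real" where
  "mat_mult r A B i j = (\<Sum>l<r. A i l * B l j)"

definition mat_id :: "nat \<Rightarrow> nat \<Rightarrow> nat \<Rightarrow> real" where
  "mat_id r i j = (if i < r \<and> j < r \<and> i = j then 1 else 0)"

fun mat_pow :: "nat \<Rightarrow> (nat \<Rightarrow> nat \<Rightarrow> real) \<Rightarrow> nat \<Rightarrow> nat \<Rightarrow> nat \<Rightarrow> real" where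
  "mat_pow r A 0 = mat_id r"
| "mat_pow r A (Suc k) = mat_mult r (mat_pow r A k) A"

definition mat_vec :: "nat \<Rightarrow> (nat \<Rightarrow> nat \<Rightarrow> real) \<Rightarrow> (nat \<Rightarrow> real) \<Rightarrow> nat \<Rightarrow> real" where
  "mat_vec r A x i = (\<Sum>j<r. A i j * x j)"

definition sup_norm :: "nat \<Rightarrow> (nat \<Rightarrow> real) \<Rightarrow> real" where
  "sup_norm r x = Max ((\<lambda>i. \<bar>x i\<bar>) ` {..<r})"

end

theory Submission
  imports Defs
begin

lemma mat_pow_J:
  "mat_pow r (Jmat r) k i j = (if i < r \<and> j < r \<and> i \<le> j then real (k choose (j - i)) else 0)"
proof (induction k arbitrary: j)
  case 0
  then show ?case by (auto simp: mat_id_def)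
next
  case (Suc k)
  have "mat_pow r (Jmat r) (Suc k) i j = (\<Sum>l<r. mat_pow r (Jmat r) k i l * Jmat r l j)"
    by (simp add: mat_mult_def)
  also have "\<dots> = (\<Sum>l<r. (if l = j \<and> j < r then mat_pow r (Jmat r) k i l else 0)
                    + (if Suc l = j \<and> j < r then mat_pow r (Jmat r) k i l else 0))"
    by (rule sum.cong) (auto simp: Jmat_def)
  also have "\<dots> = (if j < r then mat_pow r (Jmat r) k i j else 0)
      + (if j < r \<and> j \<ge> 1 then mat_pow r (Jmat r) k i (j - 1) else 0)"
  proof -
    have a: "(\<Sum>l<r. (if l = j \<and> j < r then mat_pow r (Jmat r) k i l else 0)) = (if j < r then mat_pow r (Jmat r) k i j else 0)"
      by (cases "j < r") (auto simp: sum.delta)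
    have b: "(\<Sum>l<r. (if Suc l = j \<and> j < r then mat_pow r (Jmat r) k i l else 0)) = (if j < r \<and> j \<ge> 1 then mat_pow r (Jmat r) k i (j - 1) else 0)"
    proof (cases "j < r \<and> j \<ge> 1")
      case True
      then have "(\<Sum>l<r. (if Suc l = j \<and> j < r then mat_pow r (Jmat r) k i l else 0)) = (\<Sum>l<r. (if l = j - 1 then mat_pow r (Jmat r) k i l else 0))"
        by (intro sum.cong) auto
      then show ?thesis using True by (auto simp: sum.delta)
    next
      case False
      then show ?thesis by (intro trans[OF sum.neutral]) auto
    qed
    show ?thesis by (simp add: sum.distrib a b)
  qed
  also have "\<dots> = (if i < r \<and> j < r \<and> i \<le> j then real (Suc k choose (j - i)) else 0)"
  proof (cases "i < r \<and> j < r \<and> i \<le> j")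
    case True
    show ?thesis
    proof (cases "i = j")
      case True
      then have "j = i" by simp
      then show ?thesis using \<open>i < r \<and> j < r \<and> i \<le> j\<close> by (auto simp add: Suc.IH)
    next
      case False
      then obtain t where t: "j - i = Suc t" "j - 1 - i = t" using True
        by (metis Suc_diff_Suc diff_Suc_1 diff_commute le_neq_implies_less)
      show ?thesis using True False t by (auto simp add: Suc.IH)
    qed
  next
    case False
    then show ?thesis by (auto simp: Suc.IH)
  qed
  finally show ?case .
qed

definition T :: "nat \<Rightarrow> (nat \<Rightarrow> real) \<Rightarrow> (nat \<Rightarrow> real) \<Rightarrow> nat \<Rightarrow> real" where
  "T r f v i = (\<Sum>l\<in>{i..<r}. f (l - i) * v l)"

definition conv :: "(nat \<Rightarrow> real) \<Rightarrow> (nat \<Rightarrow> real) \<Rightarrow> nat \<Rightarrow> real" where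
  "conv f g s = (\<Sum>a\<le>s. f a * g (s - a))"

lemma tri_swap:
  fixes F :: "nat \<Rightarrow> nat \<Rightarrow> real"
  shows "(\<Sum>j\<in>{i..<r}. \<Sum>l\<in>{j..<r}. F j l) = (\<Sum>l\<in>{i..<r}. \<Sum>j\<in>{i..l}. F j l)"
proof -
  have "(\<Sum>j\<in>{i..<r}. \<Sum>l\<in>{j..<r}. F j l) = (\<Sum>j\<in>{i..<r}. \<Sum>l\<in>{i..<r}. if j \<le> l then F j l else 0)"
  proof (rule sum.cong[OF refl])
    fix j assume j: "j \<in> {i..<r}"
    have "{j..<r} = {l \<in> {i..<r}. j \<le> l}" using j by auto
    then show "(\<Sum>l\<in>{j..<r}. F j l) = (\<Sum>l\<in>{i..<r}. if j \<le> l then F j l else 0)"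
      by (metis (no_types) finite_atLeastLessThan sum.inter_filter)
  qed
  also have "\<dots> = (\<Sum>l\<in>{i..<r}. \<Sum>j\<in>{i..<r}. if j \<le> l then F j l else 0)"
    by (rule sum.swap)
  also have "\<dots> = (\<Sum>l\<in>{i..<r}. \<Sum>j\<in>{i..l}. F j l)"
  proof (rule sum.cong[OF refl])
    fix l assume l: "l \<in> {i..<r}"
    have "{i..l} = {j \<in> {i..<r}. j \<le> l}" using l by auto
    then show "(\<Sum>j\<in>{i..<r}. if j \<le> l then F j l else 0) = (\<Sum>j\<in>{i..l}. F j l)"
      by (metis (no_types) finite_atLeastLessThan sum.inter_filter)
  qed
  finally show ?thesis .
qed

lemma T_comp: "T r f (T r g v) i = T r (conv f g) v i"
proof -
  have "T r f (T r g v) i = (\<Sum>j\<in>{i..<r}. \<Sum>l\<in>{j..<r}. f (j - i) * (g (l - j) * v l))"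
    by (simp add: T_def sum_distrib_left)
  also have "\<dots> = (\<Sum>l\<in>{i..<r}. \<Sum>j\<in>{i..l}. f (j - i) * (g (l - j) * v l))"
    by (rule tri_swap)
  also have "\<dots> = (\<Sum>l\<in>{i..<r}. conv f g (l - i) * v l)"
  proof (rule sum.cong[OF refl])
    fix l assume l: "l \<in> {i..<r}"
    have "conv f g (l - i) = (\<Sum>a\<in>{..l - i}. f a * g (l - i - a))" by (simp add: conv_def)
    also have "\<dots> = (\<Sum>j\<in>(\<lambda>a. a + i) ` {..l - i}. f (j - i) * g (l - j))"
      by (subst sum.reindex) (auto simp: inj_on_def add.commute intro!: sum.cong)
    also have "(\<lambda>a. a + i) ` {..l - i} = {i..l}"
    proof
      show "{i..l} \<subseteq> (\<lambda>a. a + i) ` {..l - i}"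
      proof
        fix j assume "j \<in> {i..l}"
        then show "j \<in> (\<lambda>a. a + i) ` {..l - i}" by (intro image_eqI[of _ _ "j - i"]) auto
      qed
    qed (use l in auto)
    finally show "(\<Sum>j\<in>{i..l}. f (j - i) * (g (l - j) * v l)) = conv f g (l - i) * v l"
      by (simp add: sum_distrib_right mult.assoc)
  qed
  also have "\<dots> = T r (conv f g) v i" by (simp add: T_def)
  finally show ?thesis .
qed

definition dl :: "nat \<Rightarrow> real" where "dl s = (if s = 0 then 1 else 0)"

definition Cf :: "nat \<Rightarrow> nat \<Rightarrow> real" where "Cf k s = real (k choose s)"

definition gg :: "nat \<Rightarrow> nat \<Rightarrow> real" where "gg h s = (if s = 0 then 0 else real (h choose s))"

fun ee :: "nat \<Rightarrow> nat \<Rightarrow> nat \<Rightarrow> real" where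
  "ee h 0 = dl"
| "ee h (Suc m) = conv (gg h) (ee h m)"

lemma T_dl: "i < r \<Longrightarrow> T r dl v i = v i"
proof -
  assume i: "i < r"
  have "T r dl v i = (\<Sum>l\<in>{i..<r}. if l = i then v l else 0)"
    unfolding T_def dl_def by (rule sum.cong) auto
  also have "\<dots> = v i" using i by (simp add: sum.delta)
  finally show ?thesis .
qed

lemma Cf0: "Cf 0 = dl" by (auto simp: Cf_def dl_def fun_eq_iff)

lemma conv_dl: "conv f dl s = f s"
proof -
  have "conv f dl s = (\<Sum>a\<le>s. if a = s then f a else 0)"
    unfolding conv_def dl_def by (rule sum.cong) auto
  also have "\<dots> = f s" by (simp add: sum.delta)
  finally show ?thesis .
qed

lemma conv_dl': "conv f dl = f" by (simp add: fun_eq_iff conv_dl)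

lemma conv_Cf: "conv (Cf k) (Cf h) s = Cf (k + h) s"
proof -
  have "conv (Cf k) (Cf h) s = real (\<Sum>a\<le>s. (k choose a) * (h choose (s - a)))"
    by (simp add: conv_def Cf_def)
  also have "\<dots> = Cf (k + h) s" by (simp only: vandermonde Cf_def)
  finally show ?thesis .
qed

lemma conv_gg: "conv (Cf k) (gg h) s = Cf (k + h) s - Cf k s"
proof -
  have "gg h = (\<lambda>s. Cf h s - dl s)" by (auto simp: gg_def Cf_def dl_def fun_eq_iff)
  then have "conv (Cf k) (gg h) s = conv (Cf k) (Cf h) s - conv (Cf k) dl s"
    by (simp add: conv_def sum_subtractf right_diff_distrib)
  then show ?thesis by (simp add: conv_Cf conv_dl)
qed

lemma conv_gg': "conv (Cf k) (gg h) = (\<lambda>s. Cf (k + h) s - Cf k s)"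
  by (simp add: fun_eq_iff conv_gg)

lemma T_diff_coef: "T r (\<lambda>s. f s - g s) v i = T r f v i - T r g v i"
  by (simp add: T_def sum_subtractf left_diff_distrib)

lemma mat_vec_T: "i < r \<Longrightarrow> mat_vec r (mat_pow r (Jmat r) k) x i = T r (Cf k) x i"
proof -
  assume i: "i < r"
  have "mat_vec r (mat_pow r (Jmat r) k) x i = (\<Sum>j<r. if i \<le> j then Cf k (j - i) * x j else 0)"
    using i by (auto simp: mat_vec_def mat_pow_J Cf_def intro!: sum.cong)
  also have "\<dots> = (\<Sum>j\<in>{j \<in> {..<r}. i \<le> j}. Cf k (j - i) * x j)"
    by (metis (no_types) finite_lessThan sum.inter_filter)
  also have "{j \<in> {..<r}. i \<le> j} = {i..<r}" by auto
  finally show ?thesis by (simp add: T_def)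
qed

lemma bound_iter:
  assumes K: "\<And>k i. k < n \<Longrightarrow> i < r \<Longrightarrow> \<bar>T r (Cf k) x i\<bar> \<le> 1"
  shows "k + m * h < n \<Longrightarrow> i < r \<Longrightarrow> \<bar>T r (Cf k) (T r (ee h m) x) i\<bar> \<le> 2 ^ m"
proof (induction m arbitrary: k i)
  case 0
  have "T r (Cf k) (T r dl x) i = T r (Cf k) x i"
    by (simp add: T_comp conv_dl')
  then show ?case using K 0 by simp
next
  case (Suc m)
  have e: "T r (ee h (Suc m)) x = T r (gg h) (T r (ee h m) x)"
    by (simp add: T_comp fun_eq_iff)
  have "T r (Cf k) (T r (ee h (Suc m)) x) i = T r (conv (Cf k) (gg h)) (T r (ee h m) x) i"
    unfolding e by (rule T_comp)
  also have "\<dots> = T r (Cf (k + h)) (T r (ee h m) x) i - T r (Cf k) (T r (ee h m) x) i"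
    by (simp only: conv_gg' T_diff_coef)
  finally have eq: "T r (Cf k) (T r (ee h (Suc m)) x) i = \<dots>" .
  have a: "\<bar>T r (Cf (k + h)) (T r (ee h m) x) i\<bar> \<le> 2 ^ m"
    using Suc by (intro Suc.IH) auto
  have b: "\<bar>T r (Cf k) (T r (ee h m) x) i\<bar> \<le> 2 ^ m"
    using Suc by (intro Suc.IH) auto
  show ?case unfolding eq using a b by simp
qed

lemma gg_nonneg: "0 \<le> gg h a" by (simp add: gg_def)

lemma gg_le: "gg h a \<le> real h ^ a"
proof (cases "a \<le> h")
  case True
  have "h choose a \<le> h ^ a" using True by (rule binomial_le_pow)
  then have "real (h choose a) \<le> real (h ^ a)" by (simp only: of_nat_le_iff)
  then show ?thesis by (simp add: gg_def)
next
  case False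
  then show ?thesis by (simp add: gg_def binomial_eq_0)
qed

lemma ee_nonneg: "0 \<le> ee h m s"
  by (induction m arbitrary: s) (auto simp: dl_def conv_def gg_nonneg intro!: sum_nonneg)

lemma ee_zero: "s < m \<Longrightarrow> ee h m s = 0"
proof (induction m arbitrary: s)
  case 0 then show ?case by simp
next
  case (Suc m)
  have "\<And>a. a \<le> s \<Longrightarrow> gg h a * ee h m (s - a) = 0"
  proof -
    fix a assume "a \<le> s"
    show "gg h a * ee h m (s - a) = 0"
    proof (cases "a = 0")
      case True then show ?thesis by (simp add: gg_def)
    next
      case False then have "s - a < m" using Suc.prems \<open>a \<le> s\<close> by arith
      then show ?thesis using Suc.IH by simp
    qed
  qed
  then show ?case unfolding ee.simps conv_def by (intro sum.neutral) auto
qed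

lemma ee_diag: "ee h m m = real h ^ m"
proof (induction m)
  case 0 then show ?case by (simp add: dl_def)
next
  case (Suc m)
  have "ee h (Suc m) (Suc m) = (\<Sum>a\<le>Suc m. if a = 1 then real h ^ Suc m else 0)"
    unfolding ee.simps conv_def
  proof (rule sum.cong[OF refl])
    fix a assume a: "a \<in> {..Suc m}"
    show "gg h a * ee h m (Suc m - a) = (if a = 1 then real h ^ Suc m else 0)"
    proof (cases "a = 0")
      case True then show ?thesis by (simp add: gg_def)
    next
      case False
      show ?thesis
      proof (cases "a = 1")
        case True then show ?thesis using Suc.IH by (simp add: gg_def)
      next
        case False
        then have "Suc m - a < m" using \<open>a \<noteq> 0\<close> a by auto
        then show ?thesis using False by (simp add: ee_zero)
      qed
    qed
  qed
  also have "\<dots> = real h ^ Suc m" by (simp add: sum.delta')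
  finally show ?case .
qed

lemma ee_bound: "ee h m s \<le> real (s + 1) ^ m * real h ^ s"
proof (induction m arbitrary: s)
  case 0 then show ?case by (simp add: dl_def)
next
  case (Suc m)
  have "ee h (Suc m) s = (\<Sum>a\<le>s. gg h a * ee h m (s - a))" by (simp add: conv_def)
  also have "\<dots> \<le> of_nat (card {..s}) * (real (s + 1) ^ m * real h ^ s)"
  proof (rule sum_bounded_above)
    fix a assume a: "a \<in> {..s}"
    have "gg h a * ee h m (s - a) \<le> real h ^ a * (real (s - a + 1) ^ m * real h ^ (s - a))"
      by (intro mult_mono gg_le Suc.IH ee_nonneg) auto
    also have "\<dots> \<le> real h ^ a * (real (s + 1) ^ m * real h ^ (s - a))"
      by (intro mult_left_mono mult_right_mono power_mono) auto
    also have "\<dots> = real (s + 1) ^ m * (real h ^ a * real h ^ (s - a))" by simp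
    also have "real h ^ a * real h ^ (s - a) = real h ^ s"
      using a by (simp add: power_add[symmetric])
    finally show "gg h a * ee h m (s - a) \<le> real (s + 1) ^ m * real h ^ s" .
  qed
  also have "\<dots> = real (s + 1) ^ Suc m * real h ^ s" by simp
  finally show ?case .
qed

lemma absaux: "\<bar>a::real\<bar> \<le> \<bar>a + b\<bar> + \<bar>b\<bar>" by arith

lemma T0_Cf0: "0 < r \<Longrightarrow> T r (Cf 0) v 0 = v 0"
  by (simp add: Cf0 T_dl)

lemma core:
  fixes x :: "nat \<Rightarrow> real"
  assumes r: "r \<ge> 1"
    and K: "\<And>k i. k < n \<Longrightarrow> i < r \<Longrightarrow> \<bar>T r (Cf k) x i\<bar> \<le> 1"
    and mh: "\<And>m. m < r \<Longrightarrow> m * h < n"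
  shows "m < r \<Longrightarrow> \<bar>x m\<bar> * real h ^ m \<le> (real (r+1) ^ (r+1)) ^ (r - m)"
proof (induction m rule: measure_induct_rule[where f="\<lambda>m. r - m"])
  case (less m)
  define R where "R = real (r+1) ^ r"
  define Q where "Q = real (r+1) ^ (r+1)"
  have QR: "Q = real (r+1) * R" by (simp add: Q_def R_def)
  have R1: "R \<ge> 1" unfolding R_def by (rule one_le_power) simp
  have Q1: "Q \<ge> 1" unfolding Q_def by (rule one_le_power) simp
  have tm: "T r (ee h m) x 0 = real h ^ m * x m + (\<Sum>l<r. if m < l then ee h m l * x l else 0)"
  proof -
    have "T r (ee h m) x 0 = (\<Sum>l<r. (if l = m then real h ^ m * x m else 0) + (if m < l then ee h m l * x l else 0))"
      unfolding T_def atLeast0LessThan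
    proof (rule sum.cong[OF refl])
      fix l assume "l \<in> {..<r}"
      show "ee h m (l - 0) * x l = (if l = m then real h ^ m * x m else 0) + (if m < l then ee h m l * x l else 0)"
        by (cases "l < m"; cases "l = m") (auto simp: ee_zero ee_diag)
    qed
    also have "\<dots> = real h ^ m * x m + (\<Sum>l<r. if m < l then ee h m l * x l else 0)"
      using less.prems by (simp add: sum.distrib)
    finally show ?thesis .
  qed
  have b1: "\<bar>T r (ee h m) x 0\<bar> \<le> 2 ^ m"
  proof -
    have "\<bar>T r (Cf 0) (T r (ee h m) x) 0\<bar> \<le> 2 ^ m"
      by (rule bound_iter[OF K]) (use mh[OF less.prems] less.prems in auto)
    then show ?thesis using less.prems T0_Cf0[of r "T r (ee h m) x"] by simp
  qed
  have b2: "\<bar>\<Sum>l<r. if m < l then ee h m l * x l else 0\<bar> \<le> of_nat (card {..<r}) * (R * Q ^ (r - m - 1))"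
  proof -
    have "\<bar>\<Sum>l<r. if m < l then ee h m l * x l else 0\<bar> \<le> (\<Sum>l<r. \<bar>if m < l then ee h m l * x l else 0\<bar>)"
      by (rule sum_abs)
    also have "\<dots> \<le> of_nat (card {..<r}) * (R * Q ^ (r - m - 1))"
    proof (rule sum_bounded_above)
      fix l assume l: "l \<in> {..<r}"
      show "\<bar>if m < l then ee h m l * x l else 0\<bar> \<le> R * Q ^ (r - m - 1)"
      proof (cases "m < l")
        case True
        have IH: "\<bar>x l\<bar> * real h ^ l \<le> Q ^ (r - l)"
          using less.IH[of l] True l unfolding Q_def by auto
        have "\<bar>ee h m l * x l\<bar> = ee h m l * \<bar>x l\<bar>" by (simp add: abs_mult ee_nonneg)
        also have "\<dots> \<le> (real (l + 1) ^ m * real h ^ l) * \<bar>x l\<bar>"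
          by (intro mult_right_mono ee_bound) auto
        also have "\<dots> = real (l + 1) ^ m * (\<bar>x l\<bar> * real h ^ l)" by simp
        also have "\<dots> \<le> R * Q ^ (r - m - 1)"
        proof (rule mult_mono)
          have "real (l + 1) ^ m \<le> real (r + 1) ^ m" using l by (intro power_mono) auto
          also have "\<dots> \<le> R" unfolding R_def using less.prems by (intro power_increasing) auto
          finally show "real (l + 1) ^ m \<le> R" .
          have "Q ^ (r - l) \<le> Q ^ (r - m - 1)" using True Q1 by (intro power_increasing) auto
          then show "\<bar>x l\<bar> * real h ^ l \<le> Q ^ (r - m - 1)" using IH by linarith
        qed (use R1 in auto)
        finally show ?thesis using True by simp
      next
        case False
        then show ?thesis using R1 Q1 by simp
      qed
    qed
    finally show ?thesis .
  qed
  have "real h ^ m * \<bar>x m\<bar> \<le> \<bar>T r (ee h m) x 0\<bar> + \<bar>\<Sum>l<r. if m < l then ee h m l * x l else 0\<bar>"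
    unfolding tm
  proof -
    let ?A = "real h ^ m * x m" and ?S = "\<Sum>l<r. if m < l then ee h m l * x l else 0"
    have "\<bar>?A\<bar> \<le> \<bar>?A + ?S\<bar> + \<bar>?S\<bar>" 
      by (rule absaux)
    moreover have "\<bar>?A\<bar> = real h ^ m * \<bar>x m\<bar>" by (simp only: abs_mult power_abs abs_of_nat)
    ultimately show "real h ^ m * \<bar>x m\<bar> \<le> \<bar>?A + ?S\<bar> + \<bar>?S\<bar>" by (simp only:)
  qed
  also have "\<dots> \<le> R + real r * (R * Q ^ (r - m - 1))"
  proof (rule add_mono)
    have "(2::real) ^ m \<le> real (r + 1) ^ m" by (intro power_mono) (use r in auto)
    also have "\<dots> \<le> R" unfolding R_def using less.prems by (intro power_increasing) auto
    finally show "\<bar>T r (ee h m) x 0\<bar> \<le> R" using b1 by linarith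
  qed (use b2 in simp)
  also have "\<dots> \<le> R * Q ^ (r - m - 1) + real r * (R * Q ^ (r - m - 1))"
  proof -
    have "1 \<le> Q ^ (r - m - 1)" by (rule one_le_power[OF Q1])
    then have "R * 1 \<le> R * Q ^ (r - m - 1)" using R1 by (intro mult_left_mono) auto
    then show ?thesis by simp
  qed
  also have "\<dots> = Q * Q ^ (r - m - 1)" unfolding QR by (simp add: algebra_simps)
  also have "\<dots> = Q ^ Suc (r - m - 1)" by (simp only: power_Suc)
  also have "Suc (r - m - 1) = r - m" using less.prems by simp
  finally show ?case unfolding Q_def by (simp add: mult.commute)
qed

lemma xbound:
  fixes x :: "nat \<Rightarrow> real"
  assumes r: "r \<ge> 1" and n: "n \<ge> 1"
    and K: "\<And>k i. k < n \<Longrightarrow> i < r \<Longrightarrow> \<bar>T r (Cf k) x i\<bar> \<le> 1"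
    and m: "m < r"
  shows "\<bar>x m\<bar> * real n ^ m \<le> (real (r+1) ^ (r+1)) ^ r * (2 * real r) ^ r"
proof -
  define Q where "Q = real (r+1) ^ (r+1)"
  define E where "E = (2 * real r) ^ r"
  have Q1: "Q \<ge> 1" unfolding Q_def by (rule one_le_power) simp
  have QR1: "Q ^ r \<ge> 1" by (rule one_le_power[OF Q1])
  have E1: "E \<ge> 1" unfolding E_def by (rule one_le_power) (use r in simp)
  have nm: "real n ^ m \<ge> 0" by simp
  show ?thesis
  proof (cases "n < r")
    case True
    have x1: "\<bar>x m\<bar> \<le> 1" using K[of 0 m] n m T_dl[of m r x] Cf0 by simp
    have "real n ^ m \<le> (2 * real r) ^ m" using True by (intro power_mono) auto
    also have "\<dots> \<le> E" unfolding E_def using m r by (intro power_increasing) auto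
    finally have "real n ^ m \<le> E" .
    then have "\<bar>x m\<bar> * real n ^ m \<le> 1 * E" using x1 nm by (intro mult_mono) auto
    also have "\<dots> \<le> Q ^ r * E" using QR1 E1 by simp
    finally show ?thesis unfolding Q_def E_def .
  next
    case False
    define h where "h = n div r"
    have "0 < n div r" using False r by (simp add: div_greater_zero_iff)
    then have h1: "h \<ge> 1" unfolding h_def by simp
    have rh: "r * h \<le> n" unfolding h_def by simp
    have mh: "\<And>m. m < r \<Longrightarrow> m * h < n"
    proof -
      fix m assume "m < r"
      then have "m * h + h \<le> r * h" by (metis Suc_leI add.commute mult_Suc mult_le_mono1)
      then show "m * h < n" using rh h1 by linarith
    qed
    have c: "\<bar>x m\<bar> * real h ^ m \<le> Q ^ (r - m)"
      unfolding Q_def by (rule core[OF r K mh m]) auto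
    have "Q ^ (r - m) \<le> Q ^ r" using Q1 by (intro power_increasing) auto
    with c have c': "\<bar>x m\<bar> * real h ^ m \<le> Q ^ r" by linarith
    have eqn: "n = r * h + n mod r" unfolding h_def by (metis div_mult_mod_eq mult.commute)
    have "n mod r < r" using r by simp
    then have "n < r * (h + 1)" using eqn by (simp add: algebra_simps)
    also have "\<dots> \<le> 2 * r * h" using h1 by simp
    finally have "real n \<le> real (2 * r * h)" by (simp only: of_nat_le_iff less_imp_le)
    then have "real n \<le> 2 * real r * real h" by simp
    then have "real n ^ m \<le> (2 * real r * real h) ^ m" by (intro power_mono) auto
    also have "\<dots> = (2 * real r) ^ m * real h ^ m" by (simp add: power_mult_distrib)
    also have "\<dots> \<le> E * real h ^ m" unfolding E_def using m r by (intro mult_right_mono power_increasing) auto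
    finally have nE: "real n ^ m \<le> E * real h ^ m" .
    have "\<bar>x m\<bar> * real n ^ m \<le> \<bar>x m\<bar> * (E * real h ^ m)" by (intro mult_left_mono nE) auto
    also have "\<dots> = E * (\<bar>x m\<bar> * real h ^ m)" by simp
    also have "\<dots> \<le> E * Q ^ r" using c' E1 by (intro mult_left_mono) auto
    finally show ?thesis unfolding Q_def E_def by (simp add: mult.commute)
  qed
qed

abbreviation MM :: "nat \<Rightarrow> (nat \<Rightarrow> real) measure" where
  "MM r \<equiv> PiM {..<r} (\<lambda>_. lborel)"

lemma box_emeasure:
  assumes "\<And>j. j < r \<Longrightarrow> 0 \<le> a j"
  shows "emeasure (MM r) (PiE {..<r} (\<lambda>j. {- a j .. a j})) = ennreal (\<Prod>j<r. 2 * a j)"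
proof -
  interpret product_sigma_finite "\<lambda>_. lborel :: real measure" by standard
  have "emeasure (MM r) (PiE {..<r} (\<lambda>j. {- a j .. a j})) = (\<Prod>j<r. emeasure lborel {- a j .. a j})"
    by (rule emeasure_PiM) auto
  also have "\<dots> = (\<Prod>j<r. ennreal (2 * a j))"
    using assms by (intro prod.cong) auto
  also have "\<dots> = ennreal (\<Prod>j<r. 2 * a j)"
    using assms by (intro prod_ennreal) auto
  finally show ?thesis .
qed

lemma box_sets: "PiE {..<r} (\<lambda>j. {- a j .. a j}) \<in> sets (MM r)"
  by (rule sets_PiM_I_finite) auto

lemma box_measure:
  assumes "\<And>j. j < r \<Longrightarrow> 0 \<le> a j"
  shows "measure (MM r) (PiE {..<r} (\<lambda>j. {- a j .. a j})) = (\<Prod>j<r. 2 * a j)"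
proof -
  have nn: "0 \<le> (\<Prod>j<r. 2 * a j)" using assms by (intro prod_nonneg) auto
  have "measure (MM r) (PiE {..<r} (\<lambda>j. {- a j .. a j})) = enn2real (emeasure (MM r) (PiE {..<r} (\<lambda>j. {- a j .. a j})))"
    by (rule measure_def)
  also have "\<dots> = enn2real (ennreal (\<Prod>j<r. 2 * a j))" by (simp only: box_emeasure[OF assms])
  also have "\<dots> = (\<Prod>j<r. 2 * a j)" using nn by (rule enn2real_ennreal)
  finally show ?thesis .
qed

lemma box_fmeas:
  assumes "\<And>j. j < r \<Longrightarrow> 0 \<le> a j"
  shows "PiE {..<r} (\<lambda>j. {- a j .. a j}) \<in> fmeasurable (MM r)"
  unfolding fmeasurable_def using box_sets box_emeasure[OF assms] by simp

lemma T_meas: "(\<lambda>x. T r f x i) \<in> borel_measurable (MM r)"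
  unfolding T_def
  by (intro borel_measurable_sum borel_measurable_times measurable_const measurable_component_singleton) auto

lemma abs_T_meas: fixes k i :: nat shows "(\<lambda>x. \<bar>T r (Cf k) x i\<bar>) \<in> borel_measurable (MM r)"
  by (rule borel_measurable_abs[OF T_meas])

lemma le1_sets: fixes g :: "(nat \<Rightarrow> real) \<Rightarrow> real" assumes "g \<in> borel_measurable (MM r)"
  shows "{x \<in> space (MM r). g x \<le> 1} \<in> sets (MM r)"
  using assms by measurable


lemma K1: "{x \<in> space (MM r). \<forall>i\<in>{..<r}. \<bar>T r (Cf k) x i\<bar> \<le> 1} \<in> sets (MM r)"
  apply (rule sets.sets_Collect_finite_All)
   apply (rule le1_sets[OF abs_T_meas])
  apply simp
  done

lemma K_sets: "{x \<in> space (MM r). \<forall>k<n. \<forall>i<r. \<bar>T r (Cf k) x i\<bar> \<le> 1} \<in> sets (MM r)"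
proof -
  have "{x \<in> space (MM r). \<forall>k\<in>{..<n}. \<forall>i\<in>{..<r}. \<bar>T r (Cf k) x i\<bar> \<le> 1} \<in> sets (MM r)"
    apply (rule sets.sets_Collect_finite_All)
     apply (rule K1)
    apply simp
    done
  then show ?thesis by (simp only: Ball_def lessThan_iff)
qed

lemma sup_norm_le: assumes "r \<ge> 1" shows "sup_norm r v \<le> 1 \<longleftrightarrow> (\<forall>i<r. \<bar>v i\<bar> \<le> 1)"
proof -
  have "0 \<in> {..<r}" using assms by simp
  then have "{..<r} \<noteq> {}" by blast
  then show ?thesis unfolding sup_norm_def by (subst Max_le_iff) auto
qed

lemma set_eq:
  assumes r: "r \<ge> 1"
  shows "{x \<in> PiE {..<r} (\<lambda>_. UNIV). \<forall>k<n. sup_norm r (mat_vec r (mat_pow r (Jmat r) k) x) \<le> 1}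
       = {x \<in> space (MM r). \<forall>k<n. \<forall>i<r. \<bar>T r (Cf k) x i\<bar> \<le> 1}"
  by (auto simp: sup_norm_le[OF r] mat_vec_T space_PiM)

lemma Cf_le: "Cf k s \<le> real k ^ s"
  using gg_le[of k s] by (cases "s = 0") (auto simp: gg_def Cf_def)

lemma Cf_nonneg: "0 \<le> Cf k s" by (simp add: Cf_def)

lemma sum_nat_twice: "2 * (\<Sum>j<r. j) = r * (r - 1::nat)"
proof (induction r)
  case 0 then show ?case by simp
next
  case (Suc r)
  have "2 * (\<Sum>j<Suc r. j) = 2 * (\<Sum>j<r. j) + 2 * r" by simp
  also have "\<dots> = r * (r - 1) + 2 * r" using Suc by simp
  also have "\<dots> = Suc r * (Suc r - 1)" by (cases r) (simp_all add: algebra_simps)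
  finally show ?case .
qed

lemma prod_box: "(\<Prod>j<r. 2 * (a / real n ^ j)) = (2 * a) ^ r / real n ^ (\<Sum>j<r. j)"
proof -
  have "(\<Prod>j<r. 2 * (a / real n ^ j)) = (\<Prod>j<r. (2 * a) / real n ^ j)" by simp
  also have "\<dots> = (\<Prod>j<r. 2 * a) / (\<Prod>j<r. real n ^ j)" by (rule prod_dividef)
  also have "\<dots> = (2 * a) ^ r / real n ^ (\<Sum>j<r. j)" by (simp add: power_sum)
  finally show ?thesis .
qed

lemma powr_eq:
  assumes r: "r \<ge> 1" and n: "n \<ge> 1"
  shows "real n powr (- (real r * (real r - 1) / 2)) = 1 / real n ^ (\<Sum>j<r. j)"
proof -
  have "real (2 * (\<Sum>j<r. j)) = real (r * (r - 1))" by (simp only: sum_nat_twice)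
  then have "2 * real (\<Sum>j<r. j) = real r * (real r - 1)" using r by (simp add: of_nat_diff)
  then have e: "real r * (real r - 1) / 2 = real (\<Sum>j<r. j)" by simp
  have "real n powr (- (real r * (real r - 1) / 2)) = inverse (real n powr real (\<Sum>j<r. j))"
    unfolding e by (rule powr_minus)
  also have "real n powr real (\<Sum>j<r. j) = real n ^ (\<Sum>j<r. j)" by (rule powr_realpow) (use n in simp)
  also have "inverse (real n ^ (\<Sum>j<r. j)) = 1 / real n ^ (\<Sum>j<r. j)" by (simp add: divide_inverse)
  finally show ?thesis .
qed

lemma in_box_abs: "(y::real) \<in> {- a .. a} \<Longrightarrow> \<bar>y\<bar> \<le> a" by auto
lemma abs_in_box: "\<bar>y::real\<bar> \<le> a \<Longrightarrow> y \<in> {- a .. a}" by auto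

lemma low_sub:
  assumes r: "r \<ge> 1" and n: "n \<ge> 1"
  shows "PiE {..<r} (\<lambda>j. {- (1 / real r / real n ^ j) .. 1 / real r / real n ^ j})
     \<subseteq> {x \<in> space (MM r). \<forall>k<n. \<forall>i<r. \<bar>T r (Cf k) x i\<bar> \<le> 1}"
proof
  fix x assume x: "x \<in> PiE {..<r} (\<lambda>j. {- (1 / real r / real n ^ j) .. 1 / real r / real n ^ j})"
  define c where "c = 1 / real r"
  have c0: "c \<ge> 0" by (simp add: c_def)
  have xb: "\<And>l. l < r \<Longrightarrow> \<bar>x l\<bar> \<le> c / real n ^ l"
  proof -
    fix l assume l: "l < r"
    have "x l \<in> {- (1 / real r / real n ^ l) .. 1 / real r / real n ^ l}" using PiE_mem[OF x] l by simp
    then show "\<bar>x l\<bar> \<le> c / real n ^ l" unfolding c_def by (rule in_box_abs)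
  qed
  have "x \<in> space (MM r)" using x by (auto simp: space_PiM PiE_iff)
  moreover have "\<forall>k<n. \<forall>i<r. \<bar>T r (Cf k) x i\<bar> \<le> 1"
  proof (intro allI impI)
    fix k i assume k: "k < n" and i: "i < r"
    have "\<bar>T r (Cf k) x i\<bar> \<le> (\<Sum>l\<in>{i..<r}. \<bar>Cf k (l - i) * x l\<bar>)"
      unfolding T_def by (rule sum_abs)
    also have "\<dots> \<le> of_nat (card {i..<r}) * c"
    proof (rule sum_bounded_above)
      fix l assume l: "l \<in> {i..<r}"
      have "Cf k (l - i) \<le> real k ^ (l - i)" by (rule Cf_le)
      also have "\<dots> \<le> real n ^ (l - i)" using k by (intro power_mono) auto
      also have "\<dots> \<le> real n ^ l" using n by (intro power_increasing) auto
      finally have C: "Cf k (l - i) \<le> real n ^ l" .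
      have "\<bar>Cf k (l - i) * x l\<bar> = Cf k (l - i) * \<bar>x l\<bar>" by (simp add: abs_mult Cf_nonneg)
      also have "\<dots> \<le> real n ^ l * (c / real n ^ l)"
        using l xb[of l] C by (intro mult_mono Cf_nonneg) auto
      also have "\<dots> = c" using n by simp
      finally show "\<bar>Cf k (l - i) * x l\<bar> \<le> c" .
    qed
    also have "\<dots> \<le> real r * c" using c0 by (intro mult_right_mono) auto
    also have "\<dots> = 1" using r by (simp add: c_def)
    finally show "\<bar>T r (Cf k) x i\<bar> \<le> 1" .
  qed
  ultimately show "x \<in> {x \<in> space (MM r). \<forall>k<n. \<forall>i<r. \<bar>T r (Cf k) x i\<bar> \<le> 1}" by blast
qed

lemma up_sub:
  assumes r: "r \<ge> 1" and n: "n \<ge> 1"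
  shows "{x \<in> space (MM r). \<forall>k<n. \<forall>i<r. \<bar>T r (Cf k) x i\<bar> \<le> 1}
    \<subseteq> PiE {..<r} (\<lambda>j. {- ((real (r+1) ^ (r+1)) ^ r * (2 * real r) ^ r / real n ^ j) .. (real (r+1) ^ (r+1)) ^ r * (2 * real r) ^ r / real n ^ j})"
proof
  fix x assume x: "x \<in> {x \<in> space (MM r). \<forall>k<n. \<forall>i<r. \<bar>T r (Cf k) x i\<bar> \<le> 1}"
  define D where "D = (real (r+1) ^ (r+1)) ^ r * (2 * real r) ^ r"
  have K: "\<And>k i. k < n \<Longrightarrow> i < r \<Longrightarrow> \<bar>T r (Cf k) x i\<bar> \<le> 1" using x by auto
  have B1: "\<And>m. m < r \<Longrightarrow> \<bar>x m\<bar> \<le> D / real n ^ m"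
  proof -
    fix m assume m: "m < r"
    have "\<bar>x m\<bar> * real n ^ m \<le> D" unfolding D_def by (rule xbound[OF r n K m])
    then show "\<bar>x m\<bar> \<le> D / real n ^ m" using n by (simp add: field_simps)
  qed
  have B2: "x \<in> PiE {..<r} (\<lambda>_. UNIV)" using x by (auto simp: space_PiM)
  show "x \<in> PiE {..<r} (\<lambda>j. {- ((real (r+1) ^ (r+1)) ^ r * (2 * real r) ^ r / real n ^ j) .. (real (r+1) ^ (r+1)) ^ r * (2 * real r) ^ r / real n ^ j})"
  proof (rule PiE_I)
    fix j assume "j \<in> {..<r}"
    then show "x j \<in> {- ((real (r+1) ^ (r+1)) ^ r * (2 * real r) ^ r / real n ^ j) .. (real (r+1) ^ (r+1)) ^ r * (2 * real r) ^ r / real n ^ j}"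
      using B1[of j] unfolding D_def by (intro abs_in_box) simp
  next
    fix j assume "j \<notin> {..<r}"
    then show "x j = undefined" using B2 by (rule PiE_arb[rotated])
  qed
qed

theorem corollaryB3:
  fixes r :: nat
  assumes "r \<ge> 1"
  shows "\<exists>C C'. C > 0 \<and> C' > 0 \<and>
    (\<forall>n::nat. n \<ge> 2 \<longrightarrow>
      C * real n powr (- (real r * (real r - 1) / 2))
        \<le> measure (PiM {..<r} (\<lambda>_. lborel))
             {x \<in> PiE {..<r} (\<lambda>_. UNIV).
                \<forall>k<n. sup_norm r (mat_vec r (mat_pow r (Jmat r) k) x) \<le> 1}
      \<and> measure (PiM {..<r} (\<lambda>_. lborel))
             {x \<in> PiE {..<r} (\<lambda>_. UNIV).
                \<forall>k<n. sup_norm r (mat_vec r (mat_pow r (Jmat r) k) x) \<le> 1}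
        \<le> C' * real n powr (- (real r * (real r - 1) / 2)))"
proof -
  have r: "r \<ge> 1" by (rule assms)
  define D where "D = (real (r+1) ^ (r+1)) ^ r * (2 * real r) ^ r"
  have D0: "D > 0" unfolding D_def using r by simp
  define c where "c = 1 / real r"
  have c0: "c > 0" unfolding c_def using r by simp
  show ?thesis
  proof (rule exI[of _ "(2 * c) ^ r"], rule exI[of _ "(2 * D) ^ r"], intro conjI allI impI)
    show "(2 * c) ^ r > 0" using c0 by simp
    show "(2 * D) ^ r > 0" using D0 by simp
    fix n :: nat assume n2: "n \<ge> 2"
    then have n: "n \<ge> 1" by simp
    let ?K = "{x \<in> space (MM r). \<forall>k<n. \<forall>i<r. \<bar>T r (Cf k) x i\<bar> \<le> 1}"
    let ?S = "{x \<in> PiE {..<r} (\<lambda>_. UNIV). \<forall>k<n. sup_norm r (mat_vec r (mat_pow r (Jmat r) k) x) \<le> 1}"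
    have eq: "?S = ?K" by (rule set_eq[OF r])
    have Ks: "?K \<in> sets (MM r)" by (rule K_sets)
    have nn1: "\<And>j. j < r \<Longrightarrow> 0 \<le> D / real n ^ j" using D0 by simp
    have nn2: "\<And>j. j < r \<Longrightarrow> 0 \<le> 1 / real r / real n ^ j" by simp
    have Kf: "?K \<in> fmeasurable (MM r)"
      by (rule fmeasurableI2[OF box_fmeas[where a="\<lambda>j. D / real n ^ j", OF nn1] up_sub[OF r n, folded D_def] Ks])
    have pw: "real n powr (- (real r * (real r - 1) / 2)) = 1 / real n ^ (\<Sum>j<r. j)"
      by (rule powr_eq[OF r n])
    have "measure (MM r) (PiE {..<r} (\<lambda>j. {- (1 / real r / real n ^ j) .. 1 / real r / real n ^ j})) \<le> measure (MM r) ?K"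
      by (rule measure_mono_fmeasurable[OF low_sub[OF r n] box_sets Kf])
    moreover have "measure (MM r) (PiE {..<r} (\<lambda>j. {- (1 / real r / real n ^ j) .. 1 / real r / real n ^ j})) = (2 * c) ^ r * real n powr (- (real r * (real r - 1) / 2))"
    proof -
      have "measure (MM r) (PiE {..<r} (\<lambda>j. {- (1 / real r / real n ^ j) .. 1 / real r / real n ^ j})) = (\<Prod>j<r. 2 * (1 / real r / real n ^ j))"
        by (rule box_measure) simp
      also have "\<dots> = (2 * (1 / real r)) ^ r / real n ^ (\<Sum>j<r. j)" by (rule prod_box)
      also have "\<dots> = (2 * c) ^ r * real n powr (- (real r * (real r - 1) / 2))" unfolding pw c_def by simp
      finally show ?thesis .
    qed
    ultimately show "(2 * c) ^ r * real n powr (- (real r * (real r - 1) / 2)) \<le> measure (MM r) ?S"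
      unfolding eq by simp
    have "measure (MM r) ?K \<le> measure (MM r) (PiE {..<r} (\<lambda>j. {- (D / real n ^ j) .. D / real n ^ j}))"
      by (rule measure_mono_fmeasurable[OF up_sub[OF r n, folded D_def] Ks box_fmeas[where a="\<lambda>j. D / real n ^ j", OF nn1]])
    moreover have "measure (MM r) (PiE {..<r} (\<lambda>j. {- (D / real n ^ j) .. D / real n ^ j})) = (2 * D) ^ r * real n powr (- (real r * (real r - 1) / 2))"
    proof -
      have "measure (MM r) (PiE {..<r} (\<lambda>j. {- (D / real n ^ j) .. D / real n ^ j})) = (\<Prod>j<r. 2 * (D / real n ^ j))"
        by (rule box_measure) (use D0 in simp)
      also have "\<dots> = (2 * D) ^ r / real n ^ (\<Sum>j<r. j)" by (rule prod_box)
      also have "\<dots> = (2 * D) ^ r * real n powr (- (real r * (real r - 1) / 2))" unfolding pw by simp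
      finally show ?thesis .
    qed
    ultimately show "measure (MM r) ?S \<le> (2 * D) ^ r * real n powr (- (real r * (real r - 1) / 2))"
      unfolding eq by simp
  qed
qed

end
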